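(* Let $S\subset\mathbb{R}^q$ be compact and $\ell:\mathbb{R}^q\times\mathbb{R}^q\to(0,1)$ continuous. Let $s\in S$ and let $(\xi_k)_{k\in\mathbb{N}}\subset\mathbb{R}^q$ be a bounded sequence. Let $d_1,d_2,\dots\in\{0,1\}$ be independent random variables with $\Pr(d_k=1)=\ell(s,\xi_k)$. Let $c_1,\dots,c_M\in S$ be distinct, let $\hat p_0:\{1,\dots,M\}\to(0,1)$ with $\sum_i\hat p_0(i)=1$, and define $\hat p_k$ by the recursion $$\hat p_k(i\mid d_{1:k};\xi_{1:k})=\frac{g(d_k\mid c_i;\xi_k)\,\hat p_{k-1}(i\mid d_{1:k-1};\xi_{1:k-1})}{\sum_{j=1}^M g(d_k\mid c_j;\xi_k)\,\hat p_{k-1}(j\mid d_{1:k-1};\xi_{1:k-1})},$$ where $g(d\mid x;\xi)=\ell(x,\xi)^d(1-\ell(x,\xi))^{1-d}$. For $i,j\in\{1,\dots,M\}$ define $$\mu^{(i,j)}_k=\ell(s,\xi_k)\ln\frac{\ell(c_i,\xi_k)}{\ell(c_j,\xi_k)}+(1-\ell(s,\xi_k))\ln\frac{1-\ell(c_i,\xi_k)}{1-\ell(c_j,\xi_k)}.$$ If there exist a pair $(i,j)$ and some $p>\tfrac12$ such that $$\limsup_{n\to\infty}\frac{1}{n^p}\sum_{k=1}^n\mu^{(i,j)}_k<0,$$ then $\hat p_k(i\mid d_{1:k};\xi_{1:k})\to 0$ almost surely as $k\to\infty$.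
   Context: $\mu^{(i,j)}_k$ is the expected value, under the true source location $s$, of the log-likelihood ratio $\ln[g(d_k\mid c_i;\xi_k)/g(d_k\mid c_j;\xi_k)]$. *)

theory Defs
  imports "HOL-Probability.Probability"
begin

definition lik :: "('x \<Rightarrow> 'y \<Rightarrow> real) \<Rightarrow> nat \<Rightarrow> 'x \<Rightarrow> 'y \<Rightarrow> real" where
  "lik l d x xi = l x xi ^ d * (1 - l x xi) ^ (1 - d)"

text \<open>Recursive Bayesian posterior over candidates c 1, ..., c M, given the realised
  observations dd 1, dd 2, ... and query points xi 1, xi 2, ...  (index 0 unused).\<close>
fun phat :: "('x \<Rightarrow> 'y \<Rightarrow> real) \<Rightarrow> (nat \<Rightarrow> 'x) \<Rightarrow> nat \<Rightarrow> (nat \<Rightarrow> real) \<Rightarrow>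
             (nat \<Rightarrow> 'y) \<Rightarrow> (nat \<Rightarrow> nat) \<Rightarrow> nat \<Rightarrow> nat \<Rightarrow> real" where
  "phat l c M p0 xi dd 0 i = p0 i"
| "phat l c M p0 xi dd (Suc k) i =
     lik l (dd (Suc k)) (c i) (xi (Suc k)) * phat l c M p0 xi dd k i /
     (\<Sum>j = 1..M. lik l (dd (Suc k)) (c j) (xi (Suc k)) * phat l c M p0 xi dd k j)"

definition mu :: "('x \<Rightarrow> 'y \<Rightarrow> real) \<Rightarrow> 'x \<Rightarrow> (nat \<Rightarrow> 'x) \<Rightarrow> (nat \<Rightarrow> 'y) \<Rightarrow> nat \<Rightarrow> nat \<Rightarrow> nat \<Rightarrow> real" where
  "mu l s c xi k i j =
     l s (xi k) * ln (l (c i) (xi k) / l (c j) (xi k))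
     + (1 - l s (xi k)) * ln ((1 - l (c i) (xi k)) / (1 - l (c j) (xi k)))"

end

theory Submission
  imports Defs "HOL-Real_Asymp.Real_Asymp"
begin

lemma lik_pos:
  assumes "\<And>x y. 0 < l x y \<and> l x y < 1"
  shows "0 < lik l e x y"
  using assms[of x y] unfolding lik_def by simp

lemma phat_pos:
  assumes l: "\<And>x y. 0 < l x y \<and> l x y < 1"
    and p0: "\<And>m. m \<in> {1..Mc} \<Longrightarrow> 0 < p0 m \<and> p0 m < 1"
  shows "m \<in> {1..Mc} \<Longrightarrow> 0 < phat l c Mc p0 xi dd n m"
proof (induction n arbitrary: m)
  case 0
  then show ?case using p0 by simp
next
  case (Suc n)
  have "0 < (\<Sum>j = 1..Mc. lik l (dd (Suc n)) (c j) (xi (Suc n)) * phat l c Mc p0 xi dd n j)"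
    using Suc by (intro sum_pos) (auto intro!: mult_pos_pos lik_pos l)
  moreover have "0 < lik l (dd (Suc n)) (c m) (xi (Suc n)) * phat l c Mc p0 xi dd n m"
    using Suc by (intro mult_pos_pos lik_pos l) auto
  ultimately show ?case by simp
qed

lemma phat_le1:
  assumes l: "\<And>x y. 0 < l x y \<and> l x y < 1"
    and p0: "\<And>m. m \<in> {1..Mc} \<Longrightarrow> 0 < p0 m \<and> p0 m < 1"
    and m: "m \<in> {1..Mc}"
  shows "phat l c Mc p0 xi dd n m \<le> 1"
proof (cases n)
  case 0
  then show ?thesis using p0[OF m] by simp
next
  case (Suc k)
  let ?t = "\<lambda>j. lik l (dd (Suc k)) (c j) (xi (Suc k)) * phat l c Mc p0 xi dd k j"
  have nn: "\<And>j. j \<in> {1..Mc} \<Longrightarrow> 0 \<le> ?t j"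
    by (intro mult_nonneg_nonneg less_imp_le lik_pos phat_pos l p0) auto
  have "?t m \<le> sum ?t {1..Mc}"
    by (rule member_le_sum) (use m nn in auto)
  moreover have "0 < ?t m"
    using m by (intro mult_pos_pos lik_pos phat_pos l p0) auto
  ultimately have "?t m / sum ?t {1..Mc} \<le> 1" by simp
  then show ?thesis using Suc by (simp del: sum.cl_ivl_Suc)
qed

lemma phat_ratio:
  assumes l: "\<And>x y. 0 < l x y \<and> l x y < 1"
    and p0: "\<And>m. m \<in> {1..Mc} \<Longrightarrow> 0 < p0 m \<and> p0 m < 1"
    and i: "i \<in> {1..Mc}" and j: "j \<in> {1..Mc}"
  shows "phat l c Mc p0 xi dd n i / phat l c Mc p0 xi dd n j =
     p0 i / p0 j * (\<Prod>k = 1..n. lik l (dd k) (c i) (xi k) / lik l (dd k) (c j) (xi k))"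
proof (induction n)
  case 0
  then show ?case by simp
next
  case (Suc n)
  let ?S = "(\<Sum>j = 1..Mc. lik l (dd (Suc n)) (c j) (xi (Suc n)) * phat l c Mc p0 xi dd n j)"
  have S: "0 < ?S"
    using i by (intro sum_pos) (auto intro!: mult_pos_pos lik_pos l phat_pos p0)
  have "phat l c Mc p0 xi dd (Suc n) i / phat l c Mc p0 xi dd (Suc n) j
     = lik l (dd (Suc n)) (c i) (xi (Suc n)) / lik l (dd (Suc n)) (c j) (xi (Suc n))
       * (phat l c Mc p0 xi dd n i / phat l c Mc p0 xi dd n j)"
    using S lik_pos[OF l, where e="dd (Suc n)" and x="c j" and y="xi (Suc n)"] phat_pos[OF l p0 j, where c=c and xi=xi and dd=dd and n=n]
    by (simp add: field_simps)
  also have "\<dots> = p0 i / p0 j * (\<Prod>k = 1..Suc n. lik l (dd k) (c i) (xi k) / lik l (dd k) (c j) (xi k))"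
    unfolding Suc prod.cl_ivl_Suc by (simp add: mult_ac)
  finally show ?case .
qed


lemma exp_powr_small:
  assumes "C > 0" "q > (0::real)"
  shows "eventually (\<lambda>n::nat. exp (-C * real n powr q) \<le> inverse (real n ^ 2)) sequentially"
proof -
  have "eventually (\<lambda>n::nat. exp (-C * real n powr q) \<le> 1 / real n ^ 2) sequentially"
    using assms by real_asymp
  then show ?thesis by (simp add: divide_inverse)
qed

lemma exp_powr_lim:
  assumes "C > 0" "q > (0::real)"
  shows "(\<lambda>n::nat. exp (-C * real n powr q)) \<longlonglongrightarrow> 0"
  using assms by real_asymp

theorem theorem2:
  fixes S :: "(real ^ 'q) set"
    and l :: "real ^ 'q \<Rightarrow> real ^ 'q \<Rightarrow> real"
    and s :: "real ^ 'q"
    and xi :: "nat \<Rightarrow> real ^ 'q"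
    and M :: "'w measure"
    and d :: "nat \<Rightarrow> 'w \<Rightarrow> nat"
    and Mc :: nat
    and c :: "nat \<Rightarrow> real ^ 'q"
    and p0 :: "nat \<Rightarrow> real"
    and i j :: nat
    and p :: real
  assumes "compact S"
    and "continuous_on UNIV (\<lambda>(x, y). l x y)"
    and "\<And>x y. 0 < l x y \<and> l x y < 1"
    and "s \<in> S"
    and "bounded (range xi)"
    and "prob_space M"
    and "prob_space.indep_vars M (\<lambda>_. count_space UNIV) d {1..}"
    and "\<And>k w. k \<ge> 1 \<Longrightarrow> w \<in> space M \<Longrightarrow> d k w \<in> {0, 1}"
    and "\<And>k. k \<ge> 1 \<Longrightarrow> measure M {w \<in> space M. d k w = 1} = l s (xi k)"
    and "c ` {1..Mc} \<subseteq> S"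
    and "inj_on c {1..Mc}"
    and "\<And>m. m \<in> {1..Mc} \<Longrightarrow> 0 < p0 m \<and> p0 m < 1"
    and "(\<Sum>m = 1..Mc. p0 m) = 1"
    and "i \<in> {1..Mc}" and "j \<in> {1..Mc}"
    and "p > 1/2"
    and "limsup (\<lambda>n. ereal ((\<Sum>k = 1..n. mu l s c xi k i j) / real n powr p)) < 0"
  shows "AE w in M. (\<lambda>k. phat l c Mc p0 xi (\<lambda>k. d k w) k i) \<longlonglongrightarrow> 0"
proof -
  note l01 = assms(3)
  note p0 = assms(12)
  interpret P: prob_space M by fact
  define K where "K = S \<times> closure (range xi)"
  have Kc: "compact K" unfolding K_def
    using assms(1,5) by (intro compact_Times) (auto simp: compact_closure)
  have Kne: "K \<noteq> {}" unfolding K_def using assms(4) by auto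
  define f where "f = (\<lambda>z. min (l (fst z) (snd z)) (1 - l (fst z) (snd z)))"
  have cl: "continuous_on UNIV (\<lambda>z. l (fst z) (snd z))"
    using assms(2) by (simp add: case_prod_unfold)
  have "continuous_on K f" unfolding f_def
    by (intro continuous_intros continuous_on_subset[OF cl]) auto
  then obtain z0 where z0: "z0 \<in> K" "\<And>z. z \<in> K \<Longrightarrow> f z0 \<le> f z"
    using continuous_attains_inf[OF Kc Kne] by blast
  define \<delta> where "\<delta> = f z0"
  have \<delta>pos: "0 < \<delta>" unfolding \<delta>_def f_def using l01 by simp
  have \<delta>1: "\<delta> < 1" unfolding \<delta>_def f_def using l01 by (simp add: min_def)
  have lb: "\<delta> \<le> l x (xi k) \<and> l x (xi k) \<le> 1 - \<delta>" if "x \<in> S" for x k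
  proof -
    have "xi k \<in> closure (range xi)" by (meson closure_subset rangeI subsetD)
    then have "(x, xi k) \<in> K" unfolding K_def using that by auto
    from z0(2)[OF this] show ?thesis unfolding \<delta>_def f_def by simp
  qed
  have likb: "\<delta> \<le> lik l e x (xi k) \<and> lik l e x (xi k) \<le> 1" if "x \<in> S" "e \<in> {0,1}" for x k e
    using that lb[OF that(1), of k] l01[of x "xi k"] by (auto simp: lik_def)

  have ci: "c i \<in> S" and cj: "c j \<in> S" using assms(10,14,15) by auto
  define F where "F = (\<lambda>k e. ln (lik l e (c i) (xi k) / lik l e (c j) (xi k)))"
  define X where "X = (\<lambda>k w. F k (d k w))"
  define a where "a = ln \<delta>"
  have a_neg: "a < 0" unfolding a_def using \<delta>pos \<delta>1 by simp
  have Fb: "a \<le> F k e \<and> F k e \<le> - a" if "e \<in> {0,1}" for k e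
  proof -
    have A: "\<delta> \<le> lik l e (c i) (xi k)" "lik l e (c i) (xi k) \<le> 1"
      and B: "\<delta> \<le> lik l e (c j) (xi k)" "lik l e (c j) (xi k) \<le> 1"
      using likb[OF ci that, of k] likb[OF cj that, of k] by auto
    have F: "F k e = ln (lik l e (c i) (xi k)) - ln (lik l e (c j) (xi k))"
      unfolding F_def using A B \<delta>pos by (simp add: ln_div)
    have "ln \<delta> \<le> ln (lik l e (c i) (xi k))" "ln (lik l e (c i) (xi k)) \<le> 0"
      "ln \<delta> \<le> ln (lik l e (c j) (xi k))" "ln (lik l e (c j) (xi k)) \<le> 0"
      using A B \<delta>pos by auto
    then show ?thesis unfolding F a_def by linarith
  qed
  have dmeas: "d k \<in> measurable M (count_space UNIV)" if "k \<ge> 1" for k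
    using assms(7) that unfolding P.indep_vars_def by auto
  have Xmeas: "X k \<in> borel_measurable M" if "k \<ge> 1" for k
    unfolding X_def using measurable_compose[OF dmeas[OF that] borel_measurable_count_space] .
  have Xb: "X k w \<in> {a..-a}" if "k \<ge> 1" "w \<in> space M" for k w
    using Fb[OF assms(8)[OF that]] unfolding X_def by auto
  have EX: "P.expectation (X k) = mu l s c xi k i j" if k: "k \<ge> 1" for k
  proof -
    define E where "E = {w \<in> space M. d k w = 1}"
    have Em: "E \<in> sets M" unfolding E_def
      using measurable_sets[OF dmeas[OF k], of "{1}"] by (simp add: vimage_def Int_def conj_commute)
    have Ei: "integrable M (indicat_real E)"
      using Em by (intro integrable_real_indicator) (auto simp: less_top[symmetric])
    have "P.expectation (X k) = P.expectation (\<lambda>w. F k 0 + (F k 1 - F k 0) * indicator E w)"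
    proof (rule Bochner_Integration.integral_cong)
      fix w assume w: "w \<in> space M"
      show "X k w = F k 0 + (F k 1 - F k 0) * indicator E w"
        using assms(8)[OF k w] w by (auto simp: X_def E_def indicator_def)
    qed simp
    also have "\<dots> = F k 0 + (F k 1 - F k 0) * P.prob E"
      using Em Ei by (subst Bochner_Integration.integral_add) (auto simp: P.prob_space)
    also have "P.prob E = l s (xi k)" unfolding E_def using assms(9)[OF k] .
    finally show ?thesis unfolding mu_def F_def lik_def by (simp add: algebra_simps)
  qed

  have hoef: "P.prob {w \<in> space M. (\<Sum>k=1..n. mu l s c xi k i j) + \<epsilon> * real n powr p \<le> (\<Sum>k=1..n. X k w)}
      \<le> exp (- (\<epsilon>^2 / (2*a^2)) * real n powr (2*p - 1))" if n: "n \<ge> 1" and \<epsilon>: "\<epsilon> > 0" for n \<epsilon>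
  proof -
    have ind: "P.indep_vars (\<lambda>_. borel) X {1..n}"
    proof -
      have "P.indep_vars (\<lambda>_. count_space UNIV) d {1..n}"
        by (rule P.indep_vars_subset[OF assms(7)]) auto
      from P.indep_vars_compose2[OF this, of F "\<lambda>_. borel"] show ?thesis
        unfolding X_def by auto
    qed
    interpret H: Hoeffding_ineq M "{1..n}" X "\<lambda>_. a" "\<lambda>_. -a" "\<Sum>k\<in>{1..n}. P.expectation (X k)"
    proof unfold_locales
      show "P.indep_vars (\<lambda>_. borel) X {1..n}" by (rule ind)
      fix k assume "k \<in> {1..n}"
      then show "AE x in M. X k x \<in> {a..-a}" using Xb by (intro AE_I2) auto
    qed auto
    have mu_eq: "(\<Sum>k\<in>{1..n}. P.expectation (X k)) = (\<Sum>k=1..n. mu l s c xi k i j)"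
      by (rule sum.cong) (auto simp: EX)
    have sq: "(\<Sum>k\<in>{1..n}. (-a - a)^2) = real n * (4 * a^2)"
      by (simp add: power2_eq_square)
    have pos: "(\<Sum>k\<in>{1..n}. (-a - a)^2) > 0" using n a_neg unfolding sq by simp
    have "P.prob {w \<in> space M. (\<Sum>k=1..n. mu l s c xi k i j) + \<epsilon> * real n powr p \<le> (\<Sum>k=1..n. X k w)}
      \<le> exp (-2 * (\<epsilon> * real n powr p)^2 / (\<Sum>k\<in>{1..n}. (-a - a)^2))"
      using H.Hoeffding_ineq_ge[OF _ pos, of "\<epsilon> * real n powr p"] \<epsilon> unfolding mu_eq by simp
    also have "-2 * (\<epsilon> * real n powr p)^2 / (\<Sum>k\<in>{1..n}. (-a - a)^2) = - (\<epsilon>^2 / (2*a^2)) * real n powr (2*p - 1)"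
    proof -
      have "(real n powr p)^2 = real n powr (2*p - 1) * real n"
      proof -
        have "real n powr (2*p - 1) * real n = real n powr (2*p - 1) * real n powr 1" using n by simp
        also have "\<dots> = real n powr (2*p - 1 + 1)" by (rule powr_add[symmetric])
        also have "\<dots> = real n powr (2*p)" by simp
        also have "\<dots> = (real n powr p)^2" by (simp add: power2_eq_square flip: powr_add)
        finally show ?thesis by simp
      qed
      then show ?thesis unfolding sq using n a_neg by (simp add: field_simps power_mult_distrib)
    qed
    finally show ?thesis .
  qed

  obtain r where r: "limsup (\<lambda>n. ereal ((\<Sum>k = 1..n. mu l s c xi k i j) / real n powr p)) < ereal r" "ereal r < 0"
    using ereal_dense2[OF assms(17)] by blast
  define \<epsilon> where "\<epsilon> = - r / 2"
  have \<epsilon>: "\<epsilon> > 0" unfolding \<epsilon>_def using r(2) by simp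
  have ev_mu: "eventually (\<lambda>n. (\<Sum>k = 1..n. mu l s c xi k i j) \<le> - 2 * \<epsilon> * real n powr p) sequentially"
  proof -
    have "eventually (\<lambda>n. ereal ((\<Sum>k = 1..n. mu l s c xi k i j) / real n powr p) < ereal r) sequentially"
      using Limsup_lessD[OF r(1)] .
    moreover have "eventually (\<lambda>n::nat. n \<ge> 1) sequentially" by (rule eventually_ge_at_top)
    ultimately show ?thesis
    proof eventually_elim
      case (elim n)
      then have np: "real n powr p > 0" by simp
      from elim have "(\<Sum>k = 1..n. mu l s c xi k i j) / real n powr p < r" by simp
      then show ?case using np unfolding \<epsilon>_def by (simp add: divide_less_eq)
    qed
  qed
  define A where "A = (\<lambda>n. {w \<in> space M. (\<Sum>k=1..n. mu l s c xi k i j) + \<epsilon> * real n powr p \<le> (\<Sum>k=1..n. X k w)})"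
  have Am: "A n \<in> sets M" for n
  proof -
    have [measurable]: "(\<lambda>w. \<Sum>k=1..n. X k w) \<in> borel_measurable M"
      by (intro borel_measurable_sum) (use Xmeas in auto)
    show ?thesis unfolding A_def by measurable
  qed
  have sumA: "summable (\<lambda>n. measure M (A n))"
  proof (rule summable_comparison_test_ev)
    show "summable (\<lambda>n. inverse (real n ^ 2))" by (rule inverse_power_summable) simp
    have C: "\<epsilon>^2 / (2*a^2) > 0" using \<epsilon> a_neg by simp
    have q: "2*p - 1 > 0" using assms(16) by simp
    show "eventually (\<lambda>n. norm (measure M (A n)) \<le> inverse (real n ^ 2)) sequentially"
      using exp_powr_small[OF C q] eventually_ge_at_top[of 1]
    proof eventually_elim
      case (elim n)
      then show ?case using hoef[OF elim(2) \<epsilon>] unfolding A_def by simp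
    qed
  qed
  have AEA: "AE w in M. eventually (\<lambda>n. w \<in> space M - A n) sequentially"
    by (rule borel_cantelli_AE1[OF Am]) (auto simp: sumA less_top[symmetric])

  show ?thesis
  proof (rule AE_mp[OF AEA], rule AE_I2, intro impI)
    fix w assume w: "w \<in> space M" and evA: "eventually (\<lambda>n. w \<in> space M - A n) sequentially"
    let ?dd = "\<lambda>k. d k w"
    let ?ph = "\<lambda>n m. phat l c Mc p0 xi ?dd n m"
    define K where "K = p0 i / p0 j"
    have Kpos: "K > 0" unfolding K_def using p0[OF assms(14)] p0[OF assms(15)] by simp
    have bound: "?ph n i \<le> K * exp (\<Sum>k=1..n. X k w)" for n
    proof -
      have pj: "0 < ?ph n j" "?ph n j \<le> 1"
        using phat_pos[OF l01 p0 assms(15)] phat_le1[OF l01 p0 assms(15)] by auto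
      have prod: "(\<Prod>k = 1..n. lik l (?dd k) (c i) (xi k) / lik l (?dd k) (c j) (xi k)) = exp (\<Sum>k=1..n. X k w)"
        unfolding exp_sum[OF finite_atLeastAtMost] X_def F_def
        by (rule prod.cong) (auto intro!: exp_ln[symmetric] divide_pos_pos lik_pos l01)
      have "?ph n i = (?ph n i / ?ph n j) * ?ph n j" using pj by simp
      also have "\<dots> = K * exp (\<Sum>k=1..n. X k w) * ?ph n j"
        using phat_ratio[OF l01 p0 assms(14,15), where c=c and xi=xi and dd="?dd" and n=n] prod
        unfolding K_def by simp
      also have "\<dots> \<le> K * exp (\<Sum>k=1..n. X k w) * 1"
        using pj Kpos by (intro mult_left_mono) auto
      finally show ?thesis by simp
    qed
    have lim: "(\<lambda>n. K * exp (- \<epsilon> * real n powr p)) \<longlonglongrightarrow> 0"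
      using exp_powr_lim[OF \<epsilon>, of p] assms(16) by (intro tendsto_mult_right_zero) auto
    show "(\<lambda>k. ?ph k i) \<longlonglongrightarrow> 0"
    proof (rule tendsto_sandwich[OF _ _ tendsto_const lim])
      show "eventually (\<lambda>n. 0 \<le> ?ph n i) sequentially"
        using phat_pos[OF l01 p0 assms(14)] by (intro always_eventually allI less_imp_le) auto
      show "eventually (\<lambda>n. ?ph n i \<le> K * exp (- \<epsilon> * real n powr p)) sequentially"
        using evA ev_mu
      proof eventually_elim
        case (elim n)
        then have "(\<Sum>k=1..n. X k w) \<le> - \<epsilon> * real n powr p"
          using w unfolding A_def by auto
        then have "K * exp (\<Sum>k=1..n. X k w) \<le> K * exp (- \<epsilon> * real n powr p)"
          using Kpos by simp
        then show ?case using bound[of n] by linarith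
      qed
    qed
  qed
qed

end
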